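(* Let $X$ be a connected weighted bipartite graph and let $u$ be a vertex of $X$ such that $0\notin\Phi_{\mathbf e_u}$. Then $u$ is not sedentary, i.e. $\inf_{t>0}|U(t)_{u,u}|=0$.
   Context: All graphs are simple, loopless, connected and undirected, with nonzero real edge weights; $A=A(X)$ is the weighted adjacency matrix ($A_{u,v}=\omega_{u,v}$, the weight of edge $\{u,v\}$, and $0$ for non-adjacent pairs). Write the spectral decomposition $A=\sum_{\lambda}\lambda E_\lambda$ over the distinct eigenvalues $\lambda$ of $A$, where $E_\lambda$ is the orthogonal projection onto the $\lambda$-eigenspace. The transition matrix is $U(t)=e^{itA}$, $t\in\mathbb R$. The eigenvalue support of $u$ is $\Phi_{\mathbf e_u}=\{\lambda: E_\lambda\mathbf e_u\neq 0\}$. A vertex $u$ is sedentary if $\inf_{t>0}|U(t)_{u,u}|\ge C$ for some constant $0<C\le 1$, and not sedentary if $\inf_{t>0}|U(t)_{u,u}|=0$. *)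

theory Defs
  imports "HOL-Analysis.Analysis"
begin

text \<open>A weighted graph on the finite vertex type 'n is given by a weight function w:
  w u v \<noteq> 0 iff {u,v} is an edge (with weight w u v). Simple, loopless, undirected.\<close>

definition weighted_graph :: "('n::finite \<Rightarrow> 'n \<Rightarrow> real) \<Rightarrow> bool" where
  "weighted_graph w \<longleftrightarrow> (\<forall>u v. w u v = w v u) \<and> (\<forall>u. w u u = 0)"

definition wg_connected :: "('n::finite \<Rightarrow> 'n \<Rightarrow> real) \<Rightarrow> bool" where
  "wg_connected w \<longleftrightarrow> (\<forall>u v. (u, v) \<in> {(x, y). w x y \<noteq> 0}\<^sup>*)"

definition wg_bipartite :: "('n::finite \<Rightarrow> 'n \<Rightarrow> real) \<Rightarrow> bool" where
  "wg_bipartite w \<longleftrightarrow> (\<exists>S. \<forall>x y. w x y \<noteq> 0 \<longrightarrow> (x \<in> S \<longleftrightarrow> y \<notin> S))"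

definition adj_matrix :: "('n::finite \<Rightarrow> 'n \<Rightarrow> real) \<Rightarrow> real^'n^'n" where
  "adj_matrix w = (\<chi> i j. w i j)"

definition eigenspace :: "real^'n^'n \<Rightarrow> real \<Rightarrow> (real^'n) set" where
  "eigenspace A c = {v. A *v v = c *\<^sub>R v}"

definition eig_proj :: "real^'n^'n \<Rightarrow> real \<Rightarrow> real^'n \<Rightarrow> real^'n" where
  "eig_proj A c x = closest_point (eigenspace A c) x"

definition eig_support :: "real^'n^'n \<Rightarrow> 'n::finite \<Rightarrow> real set" where
  "eig_support A u = {c. eig_proj A c (axis u 1) \<noteq> 0}"

fun matpow :: "'a::semiring_1^'n::finite^'n \<Rightarrow> nat \<Rightarrow> 'a^'n^'n" where
  "matpow M 0 = mat 1"
| "matpow M (Suc k) = M ** matpow M k"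

definition mexp :: "complex^'n::finite^'n \<Rightarrow> complex^'n^'n" where
  "mexp M = (\<Sum>k. (1 / fact k) *\<^sub>R matpow M k)"

definition transition :: "real^'n::finite^'n \<Rightarrow> real \<Rightarrow> complex^'n^'n" where
  "transition A t = mexp (\<chi> i j. \<i> * complex_of_real t * complex_of_real (A $ i $ j))"

end

theory Submission imports Defs begin
lemma range_lemma:
  fixes A :: "real^'n^'n" assumes sym: "transpose A = A"
    and cp: "closest_point {v. A *v v = 0} e = 0"
  shows "\<exists>y. A *v y = e"
proof -
  let ?K = "{v. A *v v = 0}"
  have sK: "subspace ?K" by (rule linear_subspace_kernel[OF matrix_vector_mul_linear])
  have "e \<in> ?K\<^sup>\<bottom>"
    unfolding orthogonal_comp_def orthogonal_def
  proof (intro CollectI ballI)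
    fix x assume x: "x \<in> ?K"
    have mx: "-x \<in> ?K" using x subspace_neg[OF sK] by blast
    have "inner (e - closest_point ?K e) (x - closest_point ?K e) \<le> 0"
      by (rule closest_point_dot[OF subspace_imp_convex[OF sK] closed_subspace[OF sK] x])
    moreover have "inner (e - closest_point ?K e) (-x - closest_point ?K e) \<le> 0"
      by (rule closest_point_dot[OF subspace_imp_convex[OF sK] closed_subspace[OF sK] mx])
    ultimately show "x \<bullet> e = 0" using cp by (simp add: inner_commute)
  qed
  moreover have "?K = (range ((*v) A))\<^sup>\<bottom>"
    using ker_orthogonal_comp_adjoint[OF matrix_vector_mul_linear, of A]
    by (simp add: adjoint_matrix sym vimage_def)
  ultimately have "e \<in> (range ((*v) A))\<^sup>\<bottom>\<^sup>\<bottom>" by simp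
  also have "\<dots> = range ((*v) A)"
    by (rule orthogonal_comp_self[OF linear_subspace_image[OF matrix_vector_mul_linear subspace_UNIV]])
  finally show ?thesis by auto
qed

lemma matpow_entry_complex:
  fixes A :: "real^'n::finite^'n"
  shows "matpow (\<chi> i j. c * complex_of_real (A$i$j)) k $ i $ j = c^k * of_real (matpow A k $ i $ j)"
proof (induction k arbitrary: i j)
  case 0
  then show ?case by (simp add: mat_def)
next
  case (Suc k)
  have "matpow (\<chi> i j. c * complex_of_real (A$i$j)) (Suc k) $ i $ j
     = (\<Sum>l\<in>UNIV. (c * of_real (A$i$l)) * (c^k * of_real (matpow A k $ l $ j)))"
    by (simp add: matrix_matrix_mult_def Suc.IH)
  also have "\<dots> = c^(Suc k) * of_real (\<Sum>l\<in>UNIV. A$i$l * matpow A k $ l $ j)"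
    by (simp add: sum_distrib_left of_real_sum algebra_simps)
  finally show ?case by (simp add: matrix_matrix_mult_def)
qed

lemma matpow_bound:
  fixes A :: "real^'n::finite^'n"
  shows "\<bar>matpow A k $ i $ j\<bar> \<le> (\<Sum>a\<in>UNIV. \<Sum>b\<in>UNIV. \<bar>A$a$b\<bar>)^k"
proof (induction k arbitrary: i j)
  case 0
  then show ?case by (simp add: mat_def)
next
  case (Suc k)
  let ?B = "(\<Sum>a\<in>UNIV. \<Sum>b\<in>UNIV. \<bar>A$a$b\<bar>)"
  have B0: "?B \<ge> 0" by (simp add: sum_nonneg)
  have "\<bar>matpow A (Suc k) $ i $ j\<bar> = \<bar>\<Sum>l\<in>UNIV. A$i$l * matpow A k $ l $ j\<bar>"
    by (simp add: matrix_matrix_mult_def)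
  also have "\<dots> \<le> (\<Sum>l\<in>UNIV. \<bar>A$i$l\<bar> * ?B^k)"
    by (rule order_trans[OF sum_abs]) (auto intro!: sum_mono mult_left_mono Suc.IH simp: abs_mult)
  also have "\<dots> = (\<Sum>l\<in>UNIV. \<bar>A$i$l\<bar>) * ?B^k" by (simp add: sum_distrib_right)
  also have "\<dots> \<le> ?B * ?B^k"
    by (rule mult_right_mono) (auto intro!: member_le_sum[where f="\<lambda>a. \<Sum>b\<in>UNIV. \<bar>A$a$b\<bar>"] sum_nonneg simp: B0)
  finally show ?case by simp
qed

lemma matpow_comm: "matpow A n ** A = A ** matpow A n"
  by (induction n) (simp_all add: matrix_mul_assoc[symmetric])

lemma matpow_parity:
  fixes A :: "real^'n::finite^'n"
  assumes S: "\<And>x y. A$x$y \<noteq> 0 \<Longrightarrow> (x \<in> S \<longleftrightarrow> y \<notin> S)"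
  shows "matpow A k $ i $ j \<noteq> 0 \<Longrightarrow> ((i \<in> S \<longleftrightarrow> j \<in> S) \<longleftrightarrow> even k)"
proof (induction k arbitrary: i j)
  case 0
  then show ?case by (auto simp: mat_def split: if_splits)
next
  case (Suc k)
  then have "(\<Sum>l\<in>UNIV. A$i$l * matpow A k $ l $ j) \<noteq> 0" by (simp add: matrix_matrix_mult_def)
  then obtain l where "A$i$l * matpow A k $ l $ j \<noteq> 0" by (meson sum.neutral)
  then have "A$i$l \<noteq> 0" "matpow A k $ l $ j \<noteq> 0" by auto
  with S Suc.IH show ?case by fastforce
qed

lemma sums_matrix:
  fixes f :: "nat \<Rightarrow> 'a::{real_normed_vector}^'n::finite^'m::finite"
  assumes "\<And>i j. (\<lambda>k. f k $ i $ j) sums a i j"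
  shows "f sums (\<chi> i j. a i j)"
  unfolding sums_def
proof (rule vec_tendstoI)
  fix i
  show "((\<lambda>n. (\<Sum>k<n. f k) $ i) \<longlongrightarrow> (\<chi> i j. a i j) $ i) sequentially"
  proof (rule vec_tendstoI)
    fix j
    show "((\<lambda>n. (\<Sum>k<n. f k) $ i $ j) \<longlongrightarrow> (\<chi> i j. a i j) $ i $ j) sequentially"
      using assms[of i j] by (simp add: sums_def)
  qed
qed

definition pser :: "(nat \<Rightarrow> real) \<Rightarrow> real \<Rightarrow> real" where
  "pser c t = (\<Sum>n. c n * t^n)"

lemma pser_summable:
  fixes c :: "nat \<Rightarrow> real"
  assumes "\<And>n. \<bar>c n\<bar> \<le> C * B^n / fact n"
  shows "summable (\<lambda>n. c n * t^n)"
proof (rule Series.summable_comparison_test')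
  show "summable (\<lambda>n. C * (inverse (fact n) * (B * \<bar>t\<bar>)^n))"
    by (rule summable_mult[OF summable_exp])
  show "norm (c n * t ^ n) \<le> C * (inverse (fact n) * (B * \<bar>t\<bar>) ^ n)" for n
  proof -
    have "norm (c n * t ^ n) = \<bar>c n\<bar> * \<bar>t\<bar>^n" by (simp add: abs_mult power_abs)
    also have "\<dots> \<le> (C * B^n / fact n) * \<bar>t\<bar>^n"
      by (rule mult_right_mono[OF assms]) simp
    also have "\<dots> = C * (inverse (fact n) * (B * \<bar>t\<bar>) ^ n)"
      by (simp add: field_simps power_mult_distrib)
    finally show "norm (c n * t ^ n) \<le> C * (inverse (fact n) * (B * \<bar>t\<bar>) ^ n)" .
  qed
qed

lemma pser_deriv:
  fixes c :: "nat \<Rightarrow> real"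
  assumes "\<And>n. \<bar>c n\<bar> \<le> C * B^n / fact n"
  shows "(pser c has_real_derivative pser (diffs c) t) (at t)"
  unfolding pser_def
  by (rule termdiffs_strong_converges_everywhere) (rule pser_summable[OF assms])

lemma pser_lin:
  assumes "finite L" "\<And>l t. l \<in> L \<Longrightarrow> summable (\<lambda>n. c l n * t^n)"
  shows "pser (\<lambda>n. \<Sum>l\<in>L. a l * c l n) t = (\<Sum>l\<in>L. a l * pser (c l) t)"
proof -
  have "pser (\<lambda>n. \<Sum>l\<in>L. a l * c l n) t = (\<Sum>n. \<Sum>l\<in>L. a l * (c l n * t^n))"
    unfolding pser_def by (simp add: sum_distrib_right mult.assoc)
  also have "\<dots> = (\<Sum>l\<in>L. \<Sum>n. a l * (c l n * t^n))"
    by (rule suminf_sum) (rule summable_mult[OF assms(2)])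
  also have "\<dots> = (\<Sum>l\<in>L. a l * pser (c l) t)"
    unfolding pser_def by (intro sum.cong refl) (simp add: suminf_mult assms(2))
  finally show ?thesis .
qed

lemma pser_zero [simp]: "pser c 0 = c 0"
  unfolding pser_def by (rule powser_zero)

lemma Re_ii_Suc: "Re (\<i>^Suc n) = - Im (\<i>^n)" and Im_ii_Suc: "Im (\<i>^Suc n) = Re (\<i>^n)"
  by simp_all

lemma abs_Re_ii: "\<bar>Re (\<i>^n)\<bar> \<le> 1" and abs_Im_ii: "\<bar>Im (\<i>^n)\<bar> \<le> 1"
  using abs_Re_le_cmod[of "\<i>^n"] abs_Im_le_cmod[of "\<i>^n"] by (simp_all add: norm_power)


lemma fact_Suc_div: "real (Suc n) * (a / fact (Suc n)) = a / fact n"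
proof -
  have "fact (Suc n) = real (Suc n) * fact n" by simp
  then show ?thesis by (simp del: of_nat_Suc fact_Suc)
qed

lemma ii_even: "even k \<Longrightarrow> \<i>^k = complex_of_real (Re (\<i>^k))"
proof -
  assume "even k"
  then obtain m where k: "k = 2*m" by blast
  have "\<i>^k = (-1)^m" by (simp add: k power_mult)
  then show ?thesis by simp
qed

lemma abs_prod_le: "\<bar>(a::real) * b\<bar> \<le> (a^2 + b^2) / 2"
proof -
  have "0 \<le> (\<bar>a\<bar> - \<bar>b\<bar>)^2" by simp
  then show ?thesis by (simp add: power2_eq_square abs_mult algebra_simps)
qed

theorem theorem12:
  fixes w :: "'n::finite \<Rightarrow> 'n \<Rightarrow> real" and u :: 'n
  assumes "weighted_graph w"
    and "wg_connected w"
    and "wg_bipartite w"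
    and "0 \<notin> eig_support (adj_matrix w) u"
  shows "(INF t\<in>{0<..}. cmod (transition (adj_matrix w) t $ u $ u)) = 0"
proof -
  define A where "A = adj_matrix w"
  have Aij: "A$i$j = w i j" for i j by (simp add: A_def adj_matrix_def)
  have sym: "transpose A = A" using assms(1)
    by (simp add: Aij transpose_def weighted_graph_def vec_eq_iff)
  have symij: "A$i$j = A$j$i" for i j using assms(1) by (simp add: Aij weighted_graph_def)
  obtain S where S: "\<And>x y. A$x$y \<noteq> 0 \<Longrightarrow> (x \<in> S \<longleftrightarrow> y \<notin> S)"
    using assms(3) by (auto simp: wg_bipartite_def Aij)
  define e where "e = (axis u 1 :: real^'n)"
  have "closest_point {v. A *v v = 0} e = 0"
    using assms(4) by (simp add: eig_support_def eig_proj_def eigenspace_def A_def e_def)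
  then obtain y where y: "A *v y = e" using range_lemma[OF sym] by blast
  define B where "B = (\<Sum>a\<in>UNIV. \<Sum>b\<in>UNIV. \<bar>A$a$b\<bar>)"
  have B0: "B \<ge> 0" by (simp add: B_def sum_nonneg)
  define P where "P n = matpow A n" for n
  have Pb: "\<bar>P n $ i $ j\<bar> \<le> B^n" for n i j unfolding P_def B_def by (rule matpow_bound)
  define x where "x n = P n *v y" for n
  define Y where "Y = (\<Sum>l\<in>UNIV. \<bar>y$l\<bar>)"
  have Y0: "Y \<ge> 0" by (simp add: Y_def sum_nonneg)
  have xbound: "\<bar>x n $ j\<bar> \<le> Y * B^n" for n j
  proof -
    have "\<bar>x n $ j\<bar> = \<bar>\<Sum>l\<in>UNIV. P n $ j $ l * y $ l\<bar>" by (simp add: x_def matrix_vector_mult_def)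
    also have "\<dots> \<le> (\<Sum>l\<in>UNIV. B^n * \<bar>y $ l\<bar>)"
      by (rule order_trans[OF sum_abs]) (auto intro!: sum_mono mult_right_mono Pb simp: abs_mult)
    also have "\<dots> = Y * B^n" by (simp add: Y_def sum_distrib_left mult.commute)
    finally show ?thesis .
  qed
  have xSuc: "x (Suc n) $ j = (\<Sum>l\<in>UNIV. A$j$l * x n $ l)" for n j
  proof -
    have "x (Suc n) = A *v x n" by (simp add: x_def P_def matrix_vector_mul_assoc)
    then show ?thesis by (simp add: matrix_vector_mult_def)
  qed
  have x0: "x 0 = y" by (simp add: x_def P_def)
  define cco where "cco j n = Re (\<i>^n) * x n $ j / fact n" for j n
  define sco where "sco j n = Im (\<i>^n) * x n $ j / fact n" for j n
  have cbound: "\<bar>cco j n\<bar> \<le> Y * B^n / fact n" for j n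
  proof -
    have "\<bar>cco j n\<bar> = \<bar>Re (\<i>^n)\<bar> * \<bar>x n $ j\<bar> / fact n" by (simp add: cco_def abs_mult)
    also have "\<dots> \<le> 1 * (Y * B^n) / fact n"
      by (intro divide_right_mono mult_mono abs_Re_ii xbound) auto
    finally show ?thesis by simp
  qed
  have sbound: "\<bar>sco j n\<bar> \<le> Y * B^n / fact n" for j n
  proof -
    have "\<bar>sco j n\<bar> = \<bar>Im (\<i>^n)\<bar> * \<bar>x n $ j\<bar> / fact n" by (simp add: sco_def abs_mult)
    also have "\<dots> \<le> 1 * (Y * B^n) / fact n"
      by (intro divide_right_mono mult_mono abs_Im_ii xbound) auto
    finally show ?thesis by simp
  qed
  have dc: "diffs (cco j) = (\<lambda>n. \<Sum>l\<in>UNIV. (- A$j$l) * sco l n)" for j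
  proof
    fix n
    have "diffs (cco j) n = real (Suc n) * (Re (\<i>^Suc n) * x (Suc n) $ j / fact (Suc n))"
      by (simp add: diffs_def cco_def)
    also have "\<dots> = - Im (\<i>^n) * x (Suc n) $ j / fact n"
      by (simp only: fact_Suc_div Re_ii_Suc)
    also have "\<dots> = (\<Sum>l\<in>UNIV. (- A$j$l) * sco l n)"
      by (simp add: xSuc sco_def sum_distrib_left sum_divide_distrib algebra_simps)
    finally show "diffs (cco j) n = (\<Sum>l\<in>UNIV. (- A$j$l) * sco l n)" .
  qed
  have ds: "diffs (sco j) = (\<lambda>n. \<Sum>l\<in>UNIV. A$j$l * cco l n)" for j
  proof
    fix n
    have "diffs (sco j) n = real (Suc n) * (Im (\<i>^Suc n) * x (Suc n) $ j / fact (Suc n))"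
      by (simp add: diffs_def sco_def)
    also have "\<dots> = Re (\<i>^n) * x (Suc n) $ j / fact n"
      by (simp only: fact_Suc_div Im_ii_Suc)
    also have "\<dots> = (\<Sum>l\<in>UNIV. A$j$l * cco l n)"
      by (simp add: xSuc cco_def sum_distrib_left sum_divide_distrib algebra_simps)
    finally show "diffs (sco j) n = (\<Sum>l\<in>UNIV. A$j$l * cco l n)" .
  qed
  define cc where "cc j = pser (cco j)" for j
  define ss where "ss j = pser (sco j)" for j
  have Dc: "(cc j has_real_derivative (\<Sum>l\<in>UNIV. (- A$j$l) * ss l t)) (at t)" for j t
    using pser_deriv[OF cbound[of j], of t] unfolding dc cc_def ss_def
    by (subst (asm) pser_lin) (auto intro: pser_summable[OF sbound])
  have Ds: "(ss j has_real_derivative (\<Sum>l\<in>UNIV. A$j$l * cc l t)) (at t)" for j t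
    using pser_deriv[OF sbound[of j], of t] unfolding ds cc_def ss_def
    by (subst (asm) pser_lin) (auto intro: pser_summable[OF cbound])
  define E where "E t = (\<Sum>j\<in>UNIV. (cc j t)^2 + (ss j t)^2)" for t
  have DE: "(E has_real_derivative 0) (at t)" for t
  proof -
    have "(E has_real_derivative (\<Sum>j\<in>UNIV. 2 * cc j t * (\<Sum>l\<in>UNIV. (- A$j$l) * ss l t)
         + 2 * ss j t * (\<Sum>l\<in>UNIV. A$j$l * cc l t))) (at t)"
      unfolding E_def
      by (rule DERIV_sum) (auto intro!: derivative_eq_intros Dc Ds)
    moreover have "(\<Sum>j\<in>UNIV. 2 * cc j t * (\<Sum>l\<in>UNIV. (- A$j$l) * ss l t)
         + 2 * ss j t * (\<Sum>l\<in>UNIV. A$j$l * cc l t)) = 0"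
    proof -
      have "(\<Sum>j\<in>UNIV. ss j t * (\<Sum>l\<in>UNIV. A$j$l * cc l t))
          = (\<Sum>j\<in>UNIV. \<Sum>l\<in>UNIV. A$j$l * ss j t * cc l t)"
        by (simp add: sum_distrib_left algebra_simps)
      also have "\<dots> = (\<Sum>l\<in>UNIV. \<Sum>j\<in>UNIV. A$j$l * ss j t * cc l t)"
        by (rule sum.swap)
      also have "\<dots> = (\<Sum>j\<in>UNIV. cc j t * (\<Sum>l\<in>UNIV. A$j$l * ss l t))"
        by (simp add: sum_distrib_left algebra_simps symij)
      finally have eq: "(\<Sum>j\<in>UNIV. ss j t * (\<Sum>l\<in>UNIV. A$j$l * cc l t))
          = (\<Sum>j\<in>UNIV. cc j t * (\<Sum>l\<in>UNIV. A$j$l * ss l t))" .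
      have "(\<Sum>j\<in>UNIV. 2 * cc j t * (\<Sum>l\<in>UNIV. (- A$j$l) * ss l t)
         + 2 * ss j t * (\<Sum>l\<in>UNIV. A$j$l * cc l t))
         = 2 * (\<Sum>j\<in>UNIV. ss j t * (\<Sum>l\<in>UNIV. A$j$l * cc l t))
           - 2 * (\<Sum>j\<in>UNIV. cc j t * (\<Sum>l\<in>UNIV. A$j$l * ss l t))"
        by (simp add: sum.distrib sum_distrib_left sum_subtractf sum_negf algebra_simps)
      then show ?thesis using eq by simp
    qed
    ultimately show ?thesis by simp
  qed
  have E0: "E 0 = y \<bullet> y"
    by (simp add: E_def cc_def ss_def cco_def sco_def x0 inner_vec_def power2_eq_square)
  have Et: "E t = y \<bullet> y" for t
    using DERIV_isconst_all[of E t 0] DE E0 by auto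
  define ch where "ch n = Re (\<i>^n) * (y \<bullet> x n) / fact n" for n
  have ch_eq: "ch = (\<lambda>n. \<Sum>j\<in>UNIV. y$j * cco j n)"
    by (auto simp: ch_def cco_def inner_vec_def sum_distrib_left sum_divide_distrib algebra_simps)
  have h_eq: "pser ch t = (\<Sum>j\<in>UNIV. y$j * cc j t)" for t
    unfolding ch_eq cc_def by (rule pser_lin) (auto intro: pser_summable[OF cbound])
  have hbound: "\<bar>pser ch t\<bar> \<le> y \<bullet> y" for t
  proof -
    have "\<bar>pser ch t\<bar> \<le> (\<Sum>j\<in>UNIV. \<bar>y$j * cc j t\<bar>)" unfolding h_eq by (rule sum_abs)
    also have "\<dots> \<le> (\<Sum>j\<in>UNIV. ((y$j)^2 + ((cc j t)^2 + (ss j t)^2)) / 2)"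
    proof (rule sum_mono)
      fix j
      have "\<bar>y$j * cc j t\<bar> \<le> ((y$j)^2 + (cc j t)^2) / 2" by (rule abs_prod_le)
      also have "\<dots> \<le> ((y$j)^2 + ((cc j t)^2 + (ss j t)^2)) / 2" by simp
      finally show "\<bar>y$j * cc j t\<bar> \<le> ((y$j)^2 + ((cc j t)^2 + (ss j t)^2)) / 2" .
    qed
    also have "\<dots> = (y \<bullet> y + E t) / 2"
      by (simp add: E_def inner_vec_def power2_eq_square sum.distrib sum_divide_distrib[symmetric])
    also have "\<dots> = y \<bullet> y" by (simp add: Et)
    finally show ?thesis .
  qed
  have yxb: "\<bar>y \<bullet> x n\<bar> \<le> (Y * Y) * B^n" for n
  proof -
    have "\<bar>y \<bullet> x n\<bar> \<le> (\<Sum>j\<in>UNIV. \<bar>y$j\<bar> * (Y * B^n))"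
      unfolding inner_vec_def
      by (rule order_trans[OF sum_abs]) (auto intro!: sum_mono mult_left_mono xbound simp: abs_mult)
    also have "\<dots> = (\<Sum>j\<in>UNIV. \<bar>y$j\<bar>) * (Y * B^n)" by (rule sum_distrib_right[symmetric])
    also have "\<dots> = (Y * Y) * B^n" by (simp only: Y_def[symmetric] mult.assoc)
    finally show ?thesis .
  qed
  have chbound: "\<bar>ch n\<bar> \<le> (Y * Y) * B^n / fact n" for n
  proof -
    have "\<bar>ch n\<bar> = \<bar>Re (\<i>^n)\<bar> * \<bar>y \<bullet> x n\<bar> / fact n" by (simp add: ch_def abs_mult)
    also have "\<dots> \<le> 1 * ((Y * Y) * B^n) / fact n"
      by (intro divide_right_mono mult_mono abs_Re_ii yxb) auto
    finally show ?thesis by simp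
  qed
  define p where "p n = P n $ u $ u" for n
  have symv: "(A *v a) \<bullet> b = a \<bullet> (A *v b)" for a b
    using dot_lmul_matrix[of a A b] by (simp add: transpose_matrix_vector[symmetric] sym)
  have pq: "p n = y \<bullet> x (Suc (Suc n))" for n
  proof -
    have "p n = e \<bullet> (P n *v e)"
      unfolding p_def e_def inner_axis'
      by (simp add: matrix_vector_mult_def axis_def if_distrib[of "\<lambda>z. _ * z"] cong: if_cong)
    also have "\<dots> = y \<bullet> (A *v (P n *v (A *v y)))" by (simp add: y[symmetric] symv)
    also have "A *v (P n *v (A *v y)) = (A ** (P n ** A)) *v y" by (simp add: matrix_vector_mul_assoc)
    also have "A ** (P n ** A) = P (Suc (Suc n))" by (simp add: P_def matpow_comm)
    finally show ?thesis by (simp add: x_def)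
  qed
  define fco where "fco n = Re (\<i>^n) * p n / fact n" for n
  have fbound: "\<bar>fco n\<bar> \<le> 1 * B^n / fact n" for n
  proof -
    have "\<bar>fco n\<bar> = \<bar>Re (\<i>^n)\<bar> * \<bar>p n\<bar> / fact n" by (simp add: fco_def abs_mult)
    also have "\<dots> \<le> 1 * B^n / fact n"
      by (intro divide_right_mono mult_mono abs_Re_ii) (auto simp: p_def Pb)
    finally show ?thesis .
  qed
  have dch: "diffs ch n = Re (\<i>^Suc n) * (y \<bullet> x (Suc n)) / fact n" for n
    by (simp only: diffs_def ch_def fact_Suc_div)
  have dchbound: "\<bar>diffs ch n\<bar> \<le> (Y * Y * B) * B^n / fact n" for n
  proof -
    have "\<bar>diffs ch n\<bar> = \<bar>Re (\<i>^Suc n)\<bar> * \<bar>y \<bullet> x (Suc n)\<bar> / fact n" by (simp add: dch abs_mult)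
    also have "\<dots> \<le> 1 * ((Y * Y) * B^Suc n) / fact n"
      by (intro divide_right_mono mult_mono abs_Re_ii yxb) auto
    finally show ?thesis by (simp add: algebra_simps)
  qed
  have ddch: "diffs (diffs ch) = (\<lambda>n. - fco n)"
  proof
    fix n
    have "diffs (diffs ch) n = real (Suc n) * (Re (\<i>^Suc (Suc n)) * (y \<bullet> x (Suc (Suc n))) / fact (Suc n))"
      by (simp add: diffs_def[of "diffs ch"] dch del: power_Suc)
    also have "\<dots> = Re (\<i>^Suc (Suc n)) * (y \<bullet> x (Suc (Suc n))) / fact n"
      by (simp only: fact_Suc_div)
    also have "\<dots> = - fco n" by (simp add: fco_def pq)
    finally show "diffs (diffs ch) n = - fco n" .
  qed
  have Dh: "(pser ch has_real_derivative pser (diffs ch) t) (at t)" for t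
    by (rule pser_deriv[OF chbound])
  have Dh1: "(pser (diffs ch) has_real_derivative - pser fco t) (at t)" for t
  proof -
    have "pser (\<lambda>n. - fco n) t = - pser fco t"
      unfolding pser_def using suminf_minus[OF pser_summable[OF fbound, of t]] by simp
    then show ?thesis using pser_deriv[OF dchbound, of t] by (simp add: ddch)
  qed
  have Df: "isCont (pser fco) t" for t
    by (rule DERIV_isCont[OF pser_deriv[OF fbound]])
  have f0: "pser fco 0 = 1" by (simp add: fco_def p_def P_def mat_def)
  have h1_0: "pser (diffs ch) 0 = 0" by (simp add: dch)
  have U: "transition A t $ u $ u = complex_of_real (pser fco t)" for t
  proof -
    define M where "M = (\<chi> i j. \<i> * complex_of_real t * complex_of_real (A $ i $ j))"
    have Ment: "((1 / fact k) *\<^sub>R matpow M k) $ i $ j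
        = (1/fact k) *\<^sub>R ((\<i> * of_real t)^k * complex_of_real (P k $ i $ j))" for k i j
      by (simp add: M_def P_def matpow_entry_complex)
    have summ: "summable (\<lambda>k. (1/fact k) *\<^sub>R ((\<i> * of_real t)^k * complex_of_real (P k $ i $ j)))" for i j
    proof (rule Series.summable_comparison_test')
      show "summable (\<lambda>k. inverse (fact k) * (B * \<bar>t\<bar>)^k)" by (rule summable_exp)
      show "norm ((1/fact k) *\<^sub>R ((\<i> * of_real t)^k * complex_of_real (P k $ i $ j)))
          \<le> inverse (fact k) * (B * \<bar>t\<bar>)^k" for k
      proof -
        have "norm ((1/fact k) *\<^sub>R ((\<i> * of_real t)^k * complex_of_real (P k $ i $ j)))
            = (1/fact k) * (\<bar>t\<bar>^k * \<bar>P k $ i $ j\<bar>)" by (simp add: norm_mult norm_power)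
        also have "\<dots> \<le> (1/fact k) * (\<bar>t\<bar>^k * B^k)" by (intro mult_left_mono Pb) auto
        finally show ?thesis by (simp add: power_mult_distrib field_simps)
      qed
    qed
    have "(\<lambda>k. (1 / fact k) *\<^sub>R matpow M k) sums
       (\<chi> i j. \<Sum>k. (1/fact k) *\<^sub>R ((\<i> * of_real t)^k * complex_of_real (P k $ i $ j)))"
      by (rule sums_matrix) (unfold Ment, rule summable_sums[OF summ])
    then have "transition A t = (\<chi> i j. \<Sum>k. (1/fact k) *\<^sub>R ((\<i> * of_real t)^k * complex_of_real (P k $ i $ j)))"
      by (simp add: transition_def mexp_def M_def sums_iff)
    then have "transition A t $ u $ u = (\<Sum>k. (1/fact k) *\<^sub>R ((\<i> * of_real t)^k * complex_of_real (p k)))"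
      by (simp add: p_def)
    also have "\<dots> = (\<Sum>k. complex_of_real (fco k * t^k))"
    proof (rule suminf_cong)
      fix k
      show "(1/fact k) *\<^sub>R ((\<i> * of_real t)^k * complex_of_real (p k)) = complex_of_real (fco k * t^k)"
      proof (cases "p k = 0")
        case True
        then show ?thesis by (simp add: fco_def)
      next
        case False
        then have "even k" using matpow_parity[where k=k and i=u and j=u, OF S] by (simp add: p_def P_def)
        then have "\<i>^k = complex_of_real (Re (\<i>^k))" by (rule ii_even)
        then show ?thesis
          by (simp add: fco_def power_mult_distrib scaleR_conv_of_real field_simps)
      qed
    qed
    also have "\<dots> = complex_of_real (pser fco t)"
      by (simp add: pser_def suminf_of_real[OF pser_summable[OF fbound]])
    finally show ?thesis .
  qed
  have "\<exists>t>0. pser fco t = 0"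
  proof (rule ccontr)
    assume nz: "\<not> (\<exists>t>0. pser fco t = 0)"
    have fpos: "pser fco t > 0" if tge: "t \<ge> 0" for t
    proof (rule ccontr)
      assume "\<not> pser fco t > 0"
      then have le: "pser fco t \<le> 0" by simp
      obtain s where "0 \<le> s" "s \<le> t" "pser fco s = 0"
        using IVT2[of "pser fco" t 0 0] le f0 tge Df by auto
      with f0 nz show False by (cases "s = 0") auto
    qed
    have h1neg: "pser (diffs ch) 1 < 0"
    proof -
      have "pser (diffs ch) 1 < pser (diffs ch) 0"
        by (rule DERIV_neg_imp_decreasing[of 0 1]) (use Dh1 fpos in force)+
      then show ?thesis using h1_0 by simp
    qed
    define \<delta> where "\<delta> = - pser (diffs ch) 1"
    have d0: "\<delta> > 0" using h1neg by (simp add: \<delta>_def)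
    have h1le: "pser (diffs ch) z \<le> - \<delta>" if "z \<ge> 1" for z
    proof -
      have "pser (diffs ch) z \<le> pser (diffs ch) 1"
      proof (rule DERIV_nonpos_imp_nonincreasing[OF that])
        fix v :: real assume "1 \<le> v" "v \<le> z"
        then have "pser fco v > 0" using fpos by simp
        then show "\<exists>y. (pser (diffs ch) has_real_derivative y) (at v) \<and> y \<le> 0"
          using Dh1[of v] by (intro exI[of _ "- pser fco v"]) simp
      qed
      then show ?thesis by (simp add: \<delta>_def)
    qed
    define T where "T = 1 + (2 * (y \<bullet> y) + 1) / \<delta>"
    have yy: "y \<bullet> y \<ge> 0" by simp
    have yy1: "2 * (y \<bullet> y) + 1 > 0" using yy by linarith
    have T1: "T > 1" using divide_pos_pos[OF yy1 d0] by (simp add: T_def)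
    obtain z where z: "1 < z" "z < T" "pser ch T - pser ch 1 = (T - 1) * pser (diffs ch) z"
      using MVT2[OF T1, of "pser ch" "\<lambda>z. pser (diffs ch) z"] Dh by blast
    have "(T - 1) * pser (diffs ch) z \<le> (T - 1) * (- \<delta>)"
      by (rule mult_left_mono) (use h1le z T1 in auto)
    also have "(T - 1) * (- \<delta>) = - (2 * (y \<bullet> y) + 1)" using d0 by (simp add: T_def)
    finally have "pser ch T - pser ch 1 \<le> - (2 * (y \<bullet> y) + 1)" using z by simp
    with hbound[of T] hbound[of 1] show False by (simp add: abs_le_iff)
  qed
  then obtain t0 where t0: "t0 > 0" "pser fco t0 = 0" by blast
  have bdd: "bdd_below ((\<lambda>t. cmod (transition (adj_matrix w) t $ u $ u)) ` {0<..})"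
    by (rule bdd_belowI2[where m=0]) simp
  have "(INF t\<in>{0<..}. cmod (transition (adj_matrix w) t $ u $ u))
      \<le> cmod (transition (adj_matrix w) t0 $ u $ u)"
    by (rule cINF_lower[OF bdd]) (simp add: t0)
  also have "\<dots> = 0" using U[of t0] t0 by (simp add: A_def)
  finally have le0: "(INF t\<in>{0<..}. cmod (transition (adj_matrix w) t $ u $ u)) \<le> 0" .
  have "0 \<le> (INF t\<in>{0<..}. cmod (transition (adj_matrix w) t $ u $ u))"
    by (rule cINF_greatest) auto
  with le0 show ?thesis by simp
qed
end
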